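(* Let $D$ be the dihedral group of order 8, let $\lambda_1,\lambda_2:D\to\mathbb Z/2\mathbb Z$ be homomorphisms each with kernel isomorphic to $\mathbb Z/2\times\mathbb Z/2$, and let $D\curlywedge D=\{(u,v)\in D\times D:\lambda_1(u)=\lambda_2(v)\}$. Then $D\curlywedge D$ contains a unique abelian subgroup of order 16; this subgroup equals $\ker(\lambda_1)\times\ker(\lambda_2)$ and is isomorphic to $(\mathbb Z/2\mathbb Z)^4$. *)

theory Defs
  imports "HOL-Algebra.Algebra"
begin

text \<open>The dihedral group of order 8, realised concretely: the pair (a,s) stands for
  r^a f^s with r a rotation of order 4 and f a reflection, f r f = r^-1.\<close>
definition dihedral8 :: "(int \<times> int) monoid" where
  "dihedral8 = \<lparr>carrier = {0..<4} \<times> {0..<2},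
     monoid.mult = (\<lambda>(a, s) (b, t). ((a + (if s = 0 then b else - b)) mod 4, (s + t) mod 2)),
     one = (0, 0)\<rparr>"

definition fibre_prod :: "('a, 'm) monoid_scheme \<Rightarrow> ('a \<Rightarrow> 'b) \<Rightarrow> ('a \<Rightarrow> 'b) \<Rightarrow> ('a \<times> 'a) monoid" where
  "fibre_prod D l1 l2 = (DirProd D D)\<lparr>carrier := {(u, v). u \<in> carrier D \<and> v \<in> carrier D \<and> l1 u = l2 v}\<rparr>"

end

theory Submission
  imports Defs
begin


lemma carrier_D: "carrier dihedral8 = {(0,0),(1,0),(2,0),(3,0),(0,1),(1,1),(2,1),(3,1)}"
proof -
  have a: "{0..<4::int} = {0,1,2,3}" by auto
  have b: "{0..<2::int} = {0,1}" by auto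
  show ?thesis by (auto simp: dihedral8_def a b)
qed

lemma mult_D: "monoid.mult dihedral8 (a,s) (b,t) = ((a + (if s = 0 then b else - b)) mod 4, (s + t) mod 2)"
  by (simp add: dihedral8_def)

lemma one_D: "one dihedral8 = (0,0)" by (simp add: dihedral8_def)

lemma group_D: "group dihedral8"
proof (rule groupI)
  fix x y z assume "x \<in> carrier dihedral8" "y \<in> carrier dihedral8" "z \<in> carrier dihedral8"
  then show "x \<otimes>\<^bsub>dihedral8\<^esub> y \<otimes>\<^bsub>dihedral8\<^esub> z = x \<otimes>\<^bsub>dihedral8\<^esub> (y \<otimes>\<^bsub>dihedral8\<^esub> z)"
    unfolding carrier_D by (auto simp: mult_D)
next
  fix x y assume "x \<in> carrier dihedral8" "y \<in> carrier dihedral8"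
  then show "x \<otimes>\<^bsub>dihedral8\<^esub> y \<in> carrier dihedral8"
    unfolding carrier_D by (auto simp: mult_D)
next
  show "\<one>\<^bsub>dihedral8\<^esub> \<in> carrier dihedral8" by (simp add: carrier_D one_D)
next
  fix x assume "x \<in> carrier dihedral8"
  then show "\<one>\<^bsub>dihedral8\<^esub> \<otimes>\<^bsub>dihedral8\<^esub> x = x"
    unfolding carrier_D by (auto simp: mult_D one_D)
next
  fix x assume "x \<in> carrier dihedral8"
  then show "\<exists>y\<in>carrier dihedral8. y \<otimes>\<^bsub>dihedral8\<^esub> x = \<one>\<^bsub>dihedral8\<^esub>"
    unfolding carrier_D by (auto simp: mult_D one_D)
qed



definition Lb :: "int \<Rightarrow> int \<times> int \<Rightarrow> int" where
  "Lb b x = (fst x + b * snd x) mod 2"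

lemma carrier_Z2: "carrier (integer_mod_group 2) = {0,1}"
  by (auto simp: carrier_integer_mod_group)

lemma hom_shape:
  assumes hom: "l \<in> hom dihedral8 (integer_mod_group 2)"
    and iso: "dihedral8\<lparr>carrier := kernel dihedral8 (integer_mod_group 2) l\<rparr> \<cong> integer_mod_group 2 \<times>\<times> integer_mod_group 2"
  shows "\<exists>b\<in>{0,1}. \<forall>x\<in>carrier dihedral8. l x = Lb b x"
proof -
  have h: "\<And>x y. x \<in> carrier dihedral8 \<Longrightarrow> y \<in> carrier dihedral8 \<Longrightarrow> l (x \<otimes>\<^bsub>dihedral8\<^esub> y) = (l x + l y) mod 2"
    using hom by (simp add: hom_def)
  have v: "\<And>x. x \<in> carrier dihedral8 \<Longrightarrow> l x \<in> {0,1}"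
    using hom by (auto simp: hom_def carrier_Z2 Pi_def)
  have c: "(a,s) \<in> carrier dihedral8" if "a \<in> {0,1,2,3}" "s \<in> {0,1}" for a s
    using that by (auto simp: carrier_D)
  define p where "p = l (1,0)"
  define q where "q = l (0,1)"
  have p: "p \<in> {0,1}" unfolding p_def by (rule v) (simp add: carrier_D)
  have q: "q \<in> {0,1}" unfolding q_def by (rule v) (simp add: carrier_D)
  have l00: "l (0,0) = 0"
    using h[OF c c, of 0 0 0 0] v[OF c, of 0 0] by (auto simp: mult_D)
  have l20: "l (2,0) = 0"
    using h[OF c c, of 1 0 1 0] p by (auto simp: mult_D p_def)
  have l30: "l (3,0) = p"
    using h[OF c c, of 2 0 1 0] p l20 by (auto simp: mult_D p_def)
  have l01: "l (0,1) = q" by (simp add: q_def)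
  have l11: "l (1,1) = (p + q) mod 2"
    using h[OF c c, of 1 0 0 1] by (auto simp: mult_D p_def q_def)
  have l21: "l (2,1) = q"
    using h[OF c c, of 2 0 0 1] q l20 by (auto simp: mult_D q_def)
  have l31: "l (3,1) = (p + q) mod 2"
    using h[OF c c, of 3 0 0 1] q p l30 by (auto simp: mult_D q_def)
  have "p = 1"
  proof (rule ccontr)
    assume "p \<noteq> 1"
    with p have p0: "p = 0" by auto
    show False
    proof (cases "q = 0")
      case True
      have "kernel dihedral8 (integer_mod_group 2) l = carrier dihedral8"
        using p0 True l00 l20 l30 l01 l11 l21 l31 by (auto simp: kernel_def carrier_D p_def)
      then have "card (carrier dihedral8) = card ({0,1::int} \<times> {0,1::int})"
        using iso_same_card[OF iso] by (simp add: carrier_Z2)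
      then show False by (simp add: carrier_D)
    next
      case False
      with q have q1: "q = 1" by auto
      have ker: "kernel dihedral8 (integer_mod_group 2) l = {(0,0),(1,0),(2,0),(3,0)}"
        using p0 q1 l00 l20 l30 l01 l11 l21 l31 by (auto simp: kernel_def carrier_D p_def)
      obtain f where f: "f \<in> iso (dihedral8\<lparr>carrier := kernel dihedral8 (integer_mod_group 2) l\<rparr>) (integer_mod_group 2 \<times>\<times> integer_mod_group 2)"
        using iso by (auto simp: is_iso_def)
      let ?K = "dihedral8\<lparr>carrier := kernel dihedral8 (integer_mod_group 2) l\<rparr>"
      have fh: "\<And>x y. x \<in> carrier ?K \<Longrightarrow> y \<in> carrier ?K \<Longrightarrow> f (x \<otimes>\<^bsub>?K\<^esub> y) = f x \<otimes>\<^bsub>integer_mod_group 2 \<times>\<times> integer_mod_group 2\<^esub> f y"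
        using f by (auto simp: iso_def hom_def)
      have fv: "\<And>x. x \<in> carrier ?K \<Longrightarrow> f x \<in> {0,1} \<times> {0,1}"
        using f by (auto simp: iso_def hom_def carrier_Z2 Pi_def)
      have inj: "inj_on f (carrier ?K)" using f by (auto simp: iso_def bij_betw_def)
      have sq: "\<And>u. u \<in> {0,1::int} \<times> {0,1::int} \<Longrightarrow> u \<otimes>\<^bsub>integer_mod_group 2 \<times>\<times> integer_mod_group 2\<^esub> u = (0,0)"
        by (auto simp: mult_DirProd')
      have "f (2,0) = (0,0)"
        using fh[of "(1,0)" "(1,0)"] sq[OF fv[of "(1,0)"]] by (simp add: ker mult_D)
      moreover have "f (0,0) = (0,0)"
        using fh[of "(0,0)" "(0,0)"] sq[OF fv[of "(0,0)"]] by (simp add: ker mult_D)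
      ultimately have "f (2,0) = f (0,0)" by simp
      with inj have "(2::int,0::int) = (0,0)" by (auto simp: inj_on_def ker)
      then show False by simp
    qed
  qed
  have "\<forall>x\<in>carrier dihedral8. l x = Lb q x"
    using q \<open>p = 1\<close> l00 l20 l30 l01 l11 l21 l31 by (auto simp: carrier_D Lb_def p_def)
  with q show ?thesis by blast
qed



definition dl :: "(int \<times> int) list" where
  "dl = [(0,0),(1,0),(2,0),(3,0),(0,1),(1,1),(2,1),(3,1)]"

lemma set_dl: "set dl = carrier dihedral8" by (simp add: dl_def carrier_D)

lemma centD_list:
  assumes "b \<in> {0,1}" "i \<in> {0,1}"
  shows "list_all (\<lambda>u. Lb b u = 1 \<longrightarrow>
     length (filter (\<lambda>a. a \<otimes>\<^bsub>dihedral8\<^esub> u = u \<otimes>\<^bsub>dihedral8\<^esub> a \<and> Lb b a = i) dl) \<le> 2) dl"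
  using assms by (auto simp: dl_def Lb_def mult_D)


lemma Lb_range: "Lb b x = 0 \<or> Lb b x = 1"
proof -
  have "\<And>z::int. z mod 2 = 0 \<or> z mod 2 = 1" by presburger
  then show ?thesis unfolding Lb_def by blast
qed

lemma centD:
  assumes "b \<in> {0,1}" "i \<in> {0,1}" "u \<in> carrier dihedral8" "Lb b u = 1"
  shows "card {a \<in> carrier dihedral8. a \<otimes>\<^bsub>dihedral8\<^esub> u = u \<otimes>\<^bsub>dihedral8\<^esub> a \<and> Lb b a = i} \<le> 2"
proof -
  let ?P = "\<lambda>a. a \<otimes>\<^bsub>dihedral8\<^esub> u = u \<otimes>\<^bsub>dihedral8\<^esub> a \<and> Lb b a = i"
  have "length (filter ?P dl) \<le> 2"
    using centD_list[OF assms(1,2)] assms(3,4) by (auto simp: list_all_iff set_dl)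
  moreover have "{a \<in> carrier dihedral8. ?P a} = set (filter ?P dl)"
    by (simp add: set_dl)
  ultimately show ?thesis using card_length[of "filter ?P dl"] by simp
qed

lemma uniq:
  fixes H :: "((int \<times> int) \<times> (int \<times> int)) set"
  assumes b1: "b1 \<in> {0,1}" and b2: "b2 \<in> {0,1}"
    and HS: "H \<subseteq> {(u,v). u \<in> carrier dihedral8 \<and> v \<in> carrier dihedral8 \<and> Lb b1 u = Lb b2 v}"
    and cH: "card H = 16"
    and cK: "card ({x \<in> carrier dihedral8. Lb b1 x = 0} \<times> {x \<in> carrier dihedral8. Lb b2 x = 0}) = 16"
    and comm: "\<And>x y. x \<in> H \<Longrightarrow> y \<in> H \<Longrightarrow> x \<otimes>\<^bsub>dihedral8 \<times>\<times> dihedral8\<^esub> y = y \<otimes>\<^bsub>dihedral8 \<times>\<times> dihedral8\<^esub> x"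
  shows "H = {x \<in> carrier dihedral8. Lb b1 x = 0} \<times> {x \<in> carrier dihedral8. Lb b2 x = 0}"
proof -
  let ?K = "{x \<in> carrier dihedral8. Lb b1 x = 0} \<times> {x \<in> carrier dihedral8. Lb b2 x = 0}"
  have fD: "finite (carrier dihedral8)" by (simp add: carrier_D)
  have HK: "H \<subseteq> ?K"
  proof
    fix x assume xH: "x \<in> H"
    show "x \<in> ?K"
    proof (rule ccontr)
      assume nK: "x \<notin> ?K"
      obtain u v where x: "x = (u,v)" by (cases x) blast
      have uv: "u \<in> carrier dihedral8" "v \<in> carrier dihedral8" "Lb b1 u = Lb b2 v"
        using HS xH x by auto
      have u1: "Lb b1 u = 1" and v1: "Lb b2 v = 1"
        using nK uv x Lb_range[of b1 u] by auto
      define A where "A = (\<lambda>b w i. {a \<in> carrier dihedral8. a \<otimes>\<^bsub>dihedral8\<^esub> w = w \<otimes>\<^bsub>dihedral8\<^esub> a \<and> Lb b a = i})"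
      have "H \<subseteq> (A b1 u 0 \<times> A b2 v 0) \<union> (A b1 u 1 \<times> A b2 v 1)"
      proof
        fix y assume yH: "y \<in> H"
        obtain a c where y: "y = (a,c)" by (cases y) blast
        have ac: "a \<in> carrier dihedral8" "c \<in> carrier dihedral8" "Lb b1 a = Lb b2 c"
          using HS yH y by auto
        have "(a,c) \<otimes>\<^bsub>dihedral8 \<times>\<times> dihedral8\<^esub> (u,v) = (u,v) \<otimes>\<^bsub>dihedral8 \<times>\<times> dihedral8\<^esub> (a,c)"
          using comm[OF yH xH] x y by simp
        then have "a \<otimes>\<^bsub>dihedral8\<^esub> u = u \<otimes>\<^bsub>dihedral8\<^esub> a" "c \<otimes>\<^bsub>dihedral8\<^esub> v = v \<otimes>\<^bsub>dihedral8\<^esub> c"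
          by simp_all
        then show "y \<in> (A b1 u 0 \<times> A b2 v 0) \<union> (A b1 u 1 \<times> A b2 v 1)"
          using ac y Lb_range[of b1 a] by (auto simp: A_def)
      qed
      moreover have fA: "\<And>b w i. finite (A b w i)" using fD by (simp add: A_def)
      ultimately have "card H \<le> card ((A b1 u 0 \<times> A b2 v 0) \<union> (A b1 u 1 \<times> A b2 v 1))"
        by (intro card_mono) auto
      also have "\<dots> \<le> card (A b1 u 0 \<times> A b2 v 0) + card (A b1 u 1 \<times> A b2 v 1)"
        by (rule card_Un_le)
      also have "\<dots> \<le> 2 * 2 + 2 * 2"
      proof -
        have "card (A b1 u i) \<le> 2" if "i \<in> {0,1}" for i
          unfolding A_def using centD[OF b1 that uv(1) u1] .
        moreover have "card (A b2 v i) \<le> 2" if "i \<in> {0,1}" for i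
          unfolding A_def using centD[OF b2 that uv(2) v1] .
        ultimately have "card (A b1 u 0) \<le> 2" "card (A b2 v 0) \<le> 2" "card (A b1 u 1) \<le> 2" "card (A b2 v 1) \<le> 2"
          by auto
        then show ?thesis
          unfolding card_cartesian_product by (intro add_mono mult_le_mono)
      qed
      finally show False using cH by simp
    qed
  qed
  have "finite ?K" using fD by simp
  then show ?thesis using card_subset_eq[OF _ HK] cH cK by simp
qed



lemma assoc_iso: "(\<lambda>((a,b),c). (a,(b,c))) \<in> iso ((A \<times>\<times> B) \<times>\<times> C) (A \<times>\<times> (B \<times>\<times> C))"
  by (auto simp add: iso_def hom_def inj_on_def bij_betw_def image_def)

lemma comm_Z4: "comm_group (integer_mod_group 2 \<times>\<times> (integer_mod_group 2 \<times>\<times> (integer_mod_group 2 \<times>\<times> integer_mod_group 2)))"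
proof -
  have g: "group (integer_mod_group 2 \<times>\<times> (integer_mod_group 2 \<times>\<times> (integer_mod_group 2 \<times>\<times> integer_mod_group 2)))"
    by (intro DirProd_group group_integer_mod_group)
  show ?thesis
    by (rule group.group_comm_groupI[OF g]) (auto simp: mult_DirProd' add.commute)
qed

theorem proposition4p2:
  fixes l1 l2 :: "int \<times> int \<Rightarrow> int"
  defines "D \<equiv> dihedral8" and "Z2 \<equiv> integer_mod_group 2" and "P \<equiv> fibre_prod dihedral8 l1 l2"
  assumes "l1 \<in> hom D Z2" and "l2 \<in> hom D Z2"
    and "D\<lparr>carrier := kernel D Z2 l1\<rparr> \<cong> DirProd Z2 Z2"
    and "D\<lparr>carrier := kernel D Z2 l2\<rparr> \<cong> DirProd Z2 Z2"
  shows "(\<exists>!H. subgroup H P \<and> card H = 16 \<and> comm_group (P\<lparr>carrier := H\<rparr>))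
    \<and> (\<forall>H. subgroup H P \<and> card H = 16 \<and> comm_group (P\<lparr>carrier := H\<rparr>) \<longrightarrow>
          H = kernel D Z2 l1 \<times> kernel D Z2 l2
          \<and> P\<lparr>carrier := H\<rparr> \<cong> DirProd Z2 (DirProd Z2 (DirProd Z2 Z2)))"
proof -
  have gD: "group D" using group_D D_def by simp
  have gZ: "group Z2" unfolding Z2_def by simp
  obtain b1 where b1: "b1 \<in> {0,1}" "\<forall>x\<in>carrier D. l1 x = Lb b1 x"
    using hom_shape[of l1] assms(4,6) unfolding D_def Z2_def by blast
  obtain b2 where b2: "b2 \<in> {0,1}" "\<forall>x\<in>carrier D. l2 x = Lb b2 x"
    using hom_shape[of l2] assms(5,7) unfolding D_def Z2_def by blast
  define G where "G = D \<times>\<times> D"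
  have gG: "group G" unfolding G_def using gD by (intro DirProd_group)
  define S where "S = {(u,v). u \<in> carrier D \<and> v \<in> carrier D \<and> l1 u = l2 v}"
  have P_eq: "P = G\<lparr>carrier := S\<rparr>" by (simp add: P_def fibre_prod_def D_def S_def G_def)
  have S_eq: "S = {(u,v). u \<in> carrier D \<and> v \<in> carrier D \<and> Lb b1 u = Lb b2 v}"
    using b1 b2 unfolding S_def by auto
  define h where "h = (\<lambda>(u,v). (l1 u + l2 v) mod 2)"
  have hh: "h \<in> hom G Z2"
  proof -
    have "\<And>u v u' v'. u \<in> carrier D \<Longrightarrow> v \<in> carrier D \<Longrightarrow> u' \<in> carrier D \<Longrightarrow> v' \<in> carrier D \<Longrightarrow>
       h ((u,v) \<otimes>\<^bsub>G\<^esub> (u',v')) = (h (u,v) + h (u',v')) mod 2"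
    proof -
      fix u v u' v' assume "u \<in> carrier D" "v \<in> carrier D" "u' \<in> carrier D" "v' \<in> carrier D"
      then have "l1 (u \<otimes>\<^bsub>D\<^esub> u') = (l1 u + l1 u') mod 2" "l2 (v \<otimes>\<^bsub>D\<^esub> v') = (l2 v + l2 v') mod 2"
        using assms(4,5) by (auto simp: hom_def Z2_def)
      then show "h ((u,v) \<otimes>\<^bsub>G\<^esub> (u',v')) = (h (u,v) + h (u',v')) mod 2"
        by (simp add: h_def G_def) presburger
    qed
    moreover have "\<And>x. h x \<in> carrier Z2"
      by (auto simp: h_def Z2_def carrier_integer_mod_group split: prod.splits)
    ultimately show ?thesis
      by (auto simp: hom_def Z2_def G_def)
  qed
  have ghh: "group_hom G Z2 h"
    using gG gZ hh by (simp add: group_hom_def group_hom_axioms_def)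
  have lv1: "l1 u = 0 \<or> l1 u = 1" if "u \<in> carrier D" for u using b1 that Lb_range by metis
  have lv2: "l2 u = 0 \<or> l2 u = 1" if "u \<in> carrier D" for u using b2 that Lb_range by metis
  have hz: "((l1 u + l2 v) mod 2 = 0) = (l1 u = l2 v)" if "u \<in> carrier D" "v \<in> carrier D" for u v
    using lv1[OF that(1)] lv2[OF that(2)] by auto
  have hz2: "(h x = \<one>\<^bsub>Z2\<^esub>) = (x \<in> S)" if "x \<in> carrier G" for x
  proof -
    obtain u v where x: "x = (u,v)" by (cases x) blast
    have uv: "u \<in> carrier D" "v \<in> carrier D" using that x by (auto simp: G_def)
    show ?thesis using hz[OF uv] uv unfolding x h_def Z2_def S_def by simp
  qed
  have SG: "S \<subseteq> carrier G" by (auto simp: S_def G_def)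
  have kerS: "kernel G Z2 h = S"
    unfolding kernel_def using hz2 SG by blast
  have sS: "subgroup S G" using group_hom.subgroup_kernel[OF ghh] kerS by simp
  have gP: "group P" unfolding P_eq using subgroup.subgroup_is_group[OF sS gG] .
  define K1 where "K1 = kernel D Z2 l1"
  define K2 where "K2 = kernel D Z2 l2"
  have gh1: "group_hom D Z2 l1" using gD gZ assms(4) by (simp add: group_hom_def group_hom_axioms_def)
  have gh2: "group_hom D Z2 l2" using gD gZ assms(5) by (simp add: group_hom_def group_hom_axioms_def)
  have sK1: "subgroup K1 D" unfolding K1_def by (rule group_hom.subgroup_kernel[OF gh1])
  have sK2: "subgroup K2 D" unfolding K2_def by (rule group_hom.subgroup_kernel[OF gh2])
  have K1_eq: "K1 = {x \<in> carrier D. Lb b1 x = 0}"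
    using b1 by (auto simp: K1_def kernel_def Z2_def)
  have K2_eq: "K2 = {x \<in> carrier D. Lb b2 x = 0}"
    using b2 by (auto simp: K2_def kernel_def Z2_def)
  have sKG: "subgroup (K1 \<times> K2) G" unfolding G_def by (rule DirProd_subgroups[OF gD sK1 gD sK2])
  have KS: "K1 \<times> K2 \<subseteq> S" by (auto simp: K1_eq K2_eq S_eq)
  have sKP: "subgroup (K1 \<times> K2) P"
    unfolding P_eq by (rule group.subgroup_incl[OF gG sKG sS KS])
  have PK: "P\<lparr>carrier := K1 \<times> K2\<rparr> = D\<lparr>carrier := K1\<rparr> \<times>\<times> D\<lparr>carrier := K2\<rparr>"
    by (simp add: P_eq G_def DirProd_def)
  have gK1: "group (D\<lparr>carrier := K1\<rparr>)" using subgroup.subgroup_is_group[OF sK1 gD] .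
  have iso1: "P\<lparr>carrier := K1 \<times> K2\<rparr> \<cong> (Z2 \<times>\<times> Z2) \<times>\<times> (Z2 \<times>\<times> Z2)"
    unfolding PK using group.DirProd_iso_trans[OF gK1] assms(6,7) K1_def K2_def by blast
  have iso2: "(Z2 \<times>\<times> Z2) \<times>\<times> (Z2 \<times>\<times> Z2) \<cong> Z2 \<times>\<times> (Z2 \<times>\<times> (Z2 \<times>\<times> Z2))"
    using assoc_iso unfolding is_iso_def by blast
  have isoK: "P\<lparr>carrier := K1 \<times> K2\<rparr> \<cong> Z2 \<times>\<times> (Z2 \<times>\<times> (Z2 \<times>\<times> Z2))"
    using iso_trans[OF iso1 iso2] .
  have cK1: "card K1 = 4"
    using iso_same_card[OF assms(6)] by (simp add: K1_def Z2_def carrier_integer_mod_group)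
  have cK2: "card K2 = 4"
    using iso_same_card[OF assms(7)] by (simp add: K2_def Z2_def carrier_integer_mod_group)
  have cK: "card (K1 \<times> K2) = 16" by (simp add: card_cartesian_product cK1 cK2)
  have gPK: "group (P\<lparr>carrier := K1 \<times> K2\<rparr>)" using subgroup.subgroup_is_group[OF sKP gP] .
  have commK: "comm_group (P\<lparr>carrier := K1 \<times> K2\<rparr>)"
    using comm_group.iso_imp_comm_group[OF comm_Z4 group.iso_sym[OF gPK isoK[unfolded Z2_def]]] gPK
    by (simp add: group.is_monoid)
  have uniqH: "H = K1 \<times> K2" if "subgroup H P" "card H = 16" "comm_group (P\<lparr>carrier := H\<rparr>)" for H
  proof -
    have HS: "H \<subseteq> S" using subgroup.subset[OF that(1)] by (simp add: P_eq)
    have comm: "x \<otimes>\<^bsub>dihedral8 \<times>\<times> dihedral8\<^esub> y = y \<otimes>\<^bsub>dihedral8 \<times>\<times> dihedral8\<^esub> x" if "x \<in> H" "y \<in> H" for x y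
      using comm_monoid.m_comm[OF comm_group.axioms(1)[OF \<open>comm_group (P\<lparr>carrier := H\<rparr>)\<close>], of x y] that
      by (simp add: P_eq G_def D_def)
    show ?thesis
      unfolding K1_eq K2_eq D_def
    proof (rule uniq[OF b1(1) b2(1)])
      show "H \<subseteq> {(u, v). u \<in> carrier dihedral8 \<and> v \<in> carrier dihedral8 \<and> Lb b1 u = Lb b2 v}"
        using HS by (simp add: S_eq D_def)
      show "card H = 16" by fact
      show "card ({x \<in> carrier dihedral8. Lb b1 x = 0} \<times> {x \<in> carrier dihedral8. Lb b2 x = 0}) = 16"
        using cK by (simp add: K1_eq K2_eq D_def)
    qed (rule comm)
  qed
  show ?thesis
    using sKP cK commK uniqH isoK unfolding K1_def K2_def by blast
qed


end
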